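(* Let $V\subseteq\mathbb N$ with $|V|\ge 2$, and let $\mathrm{Adm}(V)$ be the set of admissible binary trees with root $V$. Then the map $\mathcal E$ sending $T\in\mathrm{Adm}(V)$ to the edge set $\{\{\min X,\max X\}: X \text{ a node of } T\}$ is a bijection from $\mathrm{Adm}(V)$ onto the set of facets of $\Delta_V$. (Its inverse sends a facet $F$ to its decomposition tree, obtained by recursively applying the decomposition $F=F^1\sqcup F^2\sqcup\{\{\min V,\max V\}\}$ of facets into facets $F^1$ of $\Delta_{V(F^1)}$ and $F^2$ of $\Delta_{V(F^2)}$ with $V(F^1)\cup V(F^2)=V$, $V(F^1)\cap V(F^2)=\{\max V(F^1)\}$, $\min V\in V(F^1)$, $\max V\in V(F^2)$.)
   Context: A path $(v_1,\dots,v_k)$ in an edge set is a sequence of distinct vertices with consecutive ones joined by edges; it is forbidden if $k\ge 4$, $v_1=\max(v_1,\dots,v_k)$, $v_k=\max(v_2,\dots,v_k)$, $v_2>v_{k-1}$. For finite $V\subseteq\mathbb N$, $\Delta_V$ is the simplicial complex on $E(K_V)$ whose faces are edge sets containing no forbidden path. A binary tree is a rooted planar tree in which every node has either zero or two (ordered) children; for a non-leaf node $X$ write $X^{(1)}$ for its older and $X^{(2)}$ for its younger child. An admissible binary tree with root $V$ is a binary tree whose nodes are labeled by subsets of $V$, with root labeled $V$, such that every node $X$ has $|X|\ge 2$, the leaves are exactly the nodes with $|X|=2$, and every non-leaf node $X$ satisfies: (a) $\min X\in X^{(1)}\setminus X^{(2)}$; (b) $\max X\in X^{(2)}\setminus X^{(1)}$;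 (c) $X^{(1)}\cup X^{(2)}=X$; (d) $X^{(1)}\cap X^{(2)}=\{\max X^{(1)}\}$. *)

theory Defs
  imports Main
begin

definition edges_K :: "nat set \<Rightarrow> nat set set" where
  "edges_K V = {e. e \<subseteq> V \<and> card e = 2}"

definition is_path :: "nat set set \<Rightarrow> nat list \<Rightarrow> bool" where
  "is_path F vs \<longleftrightarrow> vs \<noteq> [] \<and> distinct vs \<and>
     (\<forall>i. Suc i < length vs \<longrightarrow> {vs ! i, vs ! Suc i} \<in> F)"

definition forbidden_path :: "nat set set \<Rightarrow> nat list \<Rightarrow> bool" where
  "forbidden_path F vs \<longleftrightarrow> is_path F vs \<and> length vs \<ge> 4 \<and>
     hd vs = Max (set vs) \<and> last vs = Max (set (tl vs)) \<and>
     vs ! 1 > vs ! (length vs - 2)"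

definition is_face :: "nat set \<Rightarrow> nat set set \<Rightarrow> bool" where
  "is_face V F \<longleftrightarrow> F \<subseteq> edges_K V \<and> (\<nexists>vs. forbidden_path F vs)"

definition facets :: "nat set \<Rightarrow> nat set set set" where
  "facets V = {F. is_face V F \<and> (\<forall>G. is_face V G \<and> F \<subseteq> G \<longrightarrow> G = F)}"

text \<open>Binary trees whose nodes are labelled by sets; every node has zero or two
  ordered children (first = older child, second = younger child).\<close>
datatype btree = Leaf "nat set" | Node "nat set" btree btree

fun label :: "btree \<Rightarrow> nat set" where
  "label (Leaf X) = X"
| "label (Node X t1 t2) = X"

fun nodes :: "btree \<Rightarrow> nat set set" where
  "nodes (Leaf X) = {X}"
| "nodes (Node X t1 t2) = insert X (nodes t1 \<union> nodes t2)"

fun admissible :: "btree \<Rightarrow> bool" where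
  "admissible (Leaf X) \<longleftrightarrow> card X = 2"
| "admissible (Node X t1 t2) \<longleftrightarrow>
     card X \<ge> 2 \<and> card X \<noteq> 2 \<and>
     (let X1 = label t1; X2 = label t2 in
        Min X \<in> X1 - X2 \<and> Max X \<in> X2 - X1 \<and> X1 \<union> X2 = X \<and> X1 \<inter> X2 = {Max X1}) \<and>
     admissible t1 \<and> admissible t2"

definition Adm :: "nat set \<Rightarrow> btree set" where
  "Adm V = {T. admissible T \<and> label T = V}"

definition edge_map :: "btree \<Rightarrow> nat set set" where
  "edge_map T = (\<lambda>X. {Min X, Max X}) ` nodes T"

end

theory Submission
  imports Defs
begin



lemma is_path_succ:
  "is_path F vs \<longleftrightarrow> vs \<noteq> [] \<and> distinct vs \<and> successively (\<lambda>x y. {x,y} \<in> F) vs"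
  unfolding is_path_def successively_conv_nth by simp

lemma card2_eq: "card X = 2 \<Longrightarrow> X = {Min X, Max X} \<and> Min X < Max X"
proof -
  assume "card X = 2"
  then obtain x y where "X = {x,y}" "x \<noteq> y" by (auto simp: card_2_iff)
  then show ?thesis by (cases "x < y") (auto simp: min_def max_def)
qed

lemma min_less_max: "finite X \<Longrightarrow> 2 \<le> card X \<Longrightarrow> Min X < Max X"
proof -
  assume f: "finite X" and c: "2 \<le> card X"
  then have ne: "X \<noteq> {}" by auto
  have "Min X \<le> Max X" using f ne by simp
  moreover have "Min X \<noteq> Max X"
  proof
    assume eq: "Min X = Max X"
    have "X \<subseteq> {Min X}"
    proof
      fix x assume "x \<in> X"
      then have "Min X \<le> x" "x \<le> Max X" using f by auto
      then show "x \<in> {Min X}" using eq by simp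
    qed
    then have "card X \<le> card {Min X}" by (intro card_mono) auto
    then have "card X \<le> 1" by simp
    then show False using c by simp
  qed
  ultimately show ?thesis by simp
qed

lemma adm_label: "admissible t \<Longrightarrow> finite (label t) \<and> 2 \<le> card (label t)"
  by (cases t) (auto intro: card_ge_0_finite)

lemma em_Leaf[simp]: "edge_map (Leaf X) = {{Min X, Max X}}"
  by (simp add: edge_map_def)
lemma em_Node[simp]: "edge_map (Node X t1 t2) = insert {Min X, Max X} (edge_map t1 \<union> edge_map t2)"
  by (simp add: edge_map_def image_Un)

lemma node_facts:
  assumes "admissible (Node X t1 t2)"
  defines "V1 \<equiv> label t1" and "V2 \<equiv> label t2"
  shows "admissible t1" "admissible t2" "finite X" "3 \<le> card X"
    "V1 \<subseteq> X" "V2 \<subseteq> X" "Min X \<in> V1" "Min X \<notin> V2" "Max X \<in> V2" "Max X \<notin> V1"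
    "V1 \<inter> V2 = {Max V1}" "V1 \<union> V2 = X" "finite V1" "finite V2" "2 \<le> card V1" "2 \<le> card V2"
    "Max V1 \<in> V1" "Max V1 \<in> V2" "\<forall>x\<in>V1. x \<le> Max V1" "Max V2 = Max X" "Min V1 = Min X"
    "Max V1 \<noteq> Max X" "Max V1 \<noteq> Min X"
proof -
  have L: "card X \<ge> 2 \<and> card X \<noteq> 2 \<and> (Min X \<in> V1 - V2 \<and> Max X \<in> V2 - V1 \<and> V1 \<union> V2 = X \<and>
    V1 \<inter> V2 = {Max V1}) \<and> admissible t1 \<and> admissible t2"
    using assms(1) unfolding V1_def V2_def by (simp add: Let_def)
  then have A: "card X \<ge> 2" "card X \<noteq> 2" "Min X \<in> V1 - V2" "Max X \<in> V2 - V1" "V1 \<union> V2 = X"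
    "V1 \<inter> V2 = {Max V1}" "admissible t1" "admissible t2"
    by blast+
  show "admissible t1" "admissible t2" by (fact A)+
  show fX: "finite X" using A(1) by (metis card.infinite not_numeral_le_zero)
  show "3 \<le> card X" using A(1,2) by simp
  show s1: "V1 \<subseteq> X" "V2 \<subseteq> X" using A(5) by blast+
  show "Min X \<in> V1" "Min X \<notin> V2" "Max X \<in> V2" "Max X \<notin> V1" using A(3,4) by blast+
  show "V1 \<inter> V2 = {Max V1}" "V1 \<union> V2 = X" by (fact A)+
  show f1: "finite V1" "finite V2" using s1 fX finite_subset by blast+
  show "2 \<le> card V1" using adm_label[OF A(7)] V1_def by simp
  show "2 \<le> card V2" using adm_label[OF A(8)] V2_def by simp
  show "Max V1 \<in> V1" "Max V1 \<in> V2" using A(6) by blast+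
  show "\<forall>x\<in>V1. x \<le> Max V1" using f1 by simp
  have m2: "\<And>y. y \<in> V2 \<Longrightarrow> y \<le> Max X" by (rule Max_ge[OF fX]) (use s1(2) in blast)
  have m2': "Max X \<in> V2" using A(4) by blast
  show "Max V2 = Max X" by (rule Max_eqI[OF f1(2) m2 m2'])
  have m1: "\<And>y. y \<in> V1 \<Longrightarrow> Min X \<le> y" by (rule Min_le[OF fX]) (use s1(1) in blast)
  have m1': "Min X \<in> V1" using A(3) by blast
  show "Min V1 = Min X" by (rule Min_eqI[OF f1(1) m1 m1'])
  have h1: "Max V1 \<in> V1" "Max V1 \<in> V2" "Max X \<notin> V1" "Min X \<notin> V2" using A(3,4,6) by blast+
  show "Max V1 \<noteq> Max X"
  proof
    assume "Max V1 = Max X" with h1 show False by simp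
  qed
  show "Max V1 \<noteq> Min X"
  proof
    assume "Max V1 = Min X" with h1 show False by simp
  qed
qed

lemma em_sub: "admissible t \<Longrightarrow> e \<in> edge_map t \<Longrightarrow> e \<subseteq> label t \<and> card e = 2"
proof (induction t arbitrary: e)
  case (Leaf X)
  then show ?case using card2_eq[of X] by auto
next
  case (Node X t1 t2)
  note nf = node_facts[OF Node.prems(1)]
  show ?case
  proof (cases "e = {Min X, Max X}")
    case True
    have "X \<noteq> {}" using nf(3,4) by auto
    then have "Min X \<in> X" "Max X \<in> X" using nf(3) by auto
    moreover have "Min X < Max X" using min_less_max[of X] nf(3,4) by simp
    ultimately show ?thesis using True by auto
  next
    case False
    then have "e \<in> edge_map t1 \<or> e \<in> edge_map t2" using Node.prems by auto
    then show ?thesis using Node.IH[of e] nf(1,2,5,6) by auto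
  qed
qed

lemma root_in: "admissible t \<Longrightarrow> {Min (label t), Max (label t)} \<in> edge_map t"
  by (cases t) auto

lemma em_finite: "finite (edge_map t)"
  by (induction t) auto




lemma sep:
  "admissible t \<Longrightarrow> (\<forall>e\<in>edge_map t. e \<subseteq> A \<or> e \<subseteq> B) \<Longrightarrow> A \<inter> B \<subseteq> {p} \<Longrightarrow>
   (p \<notin> label t \<or> p = Max (label t)) \<Longrightarrow> label t \<subseteq> A \<or> label t \<subseteq> B"
proof (induction t)
  case (Leaf X)
  have eq: "X = {Min X, Max X}" using card2_eq[of X] Leaf.prems(1) by simp
  have "{Min X, Max X} \<subseteq> A \<or> {Min X, Max X} \<subseteq> B" using Leaf.prems(2) by simp
  then show ?case by (simp only: label.simps eq[symmetric])
next
  case (Node X t1 t2)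
  note nf = node_facts[OF Node.prems(1)]
  define V1 where "V1 = label t1"
  define V2 where "V2 = label t2"
  have pV1: "p \<notin> V1"
  proof
    assume "p \<in> V1"
    then have "p \<in> X" using nf(5) V1_def by blast
    then have "p = Max X" using Node.prems(4) by simp
    then show False using nf(10) V1_def \<open>p \<in> V1\<close> by simp
  qed
  have i1: "V1 \<subseteq> A \<or> V1 \<subseteq> B"
    using Node.IH(1)[OF nf(1) _ Node.prems(3)] Node.prems(2) pV1 V1_def by auto
  have pV2: "p \<notin> V2 \<or> p = Max V2"
  proof (cases "p \<in> V2")
    case True
    then have "p \<in> X" using nf(6) V2_def by blast
    then have "p = Max X" using Node.prems(4) by simp
    then show ?thesis using nf(20) V2_def by simp
  qed simp
  have i2: "V2 \<subseteq> A \<or> V2 \<subseteq> B"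
    using Node.IH(2)[OF nf(2) _ Node.prems(3)] Node.prems(2) pV2 V2_def by auto
  have r: "{Min X, Max X} \<subseteq> A \<or> {Min X, Max X} \<subseteq> B" using Node.prems(2) by simp
  have f: "Min X \<in> V1" "Max X \<in> V2" "Max V1 \<in> V1" "Max V1 \<in> V2" "Max V1 \<noteq> Max X" "V1 \<union> V2 = X"
    using nf V1_def V2_def by simp_all
  have AB: "\<And>x. x \<in> A \<Longrightarrow> x \<in> B \<Longrightarrow> x = p" using Node.prems(3) by blast
  have "X \<subseteq> A \<or> X \<subseteq> B"
  proof (cases "{Min X, Max X} \<subseteq> A")
    case True
    have "V1 \<subseteq> A"
    proof (rule ccontr)
      assume "\<not> V1 \<subseteq> A"
      then have "V1 \<subseteq> B" using i1 by simp
      then have "Min X = p" using AB True f(1) by blast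
      then show False using pV1 f(1) by simp
    qed
    moreover have "V2 \<subseteq> A"
    proof (rule ccontr)
      assume "\<not> V2 \<subseteq> A"
      then have "V2 \<subseteq> B" using i2 by simp
      then have "Max X = p" using AB True f(2) by blast
      moreover have "Max V1 = p" using AB \<open>V1 \<subseteq> A\<close> \<open>V2 \<subseteq> B\<close> f(3,4) by blast
      ultimately show False using f(5) by simp
    qed
    ultimately show ?thesis using f(6) by blast
  next
    case False
    then have T: "{Min X, Max X} \<subseteq> B" using r by blast
    have "V1 \<subseteq> B"
    proof (rule ccontr)
      assume "\<not> V1 \<subseteq> B"
      then have "V1 \<subseteq> A" using i1 by simp
      then have "Min X = p" using AB T f(1) by blast
      then show False using pV1 f(1) by simp
    qed
    moreover have "V2 \<subseteq> B"
    proof (rule ccontr)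
      assume "\<not> V2 \<subseteq> B"
      then have "V2 \<subseteq> A" using i2 by simp
      then have "Max X = p" using AB T f(2) by blast
      moreover have "Max V1 = p" using AB \<open>V1 \<subseteq> B\<close> \<open>V2 \<subseteq> A\<close> f(3,4) by blast
      ultimately show False using f(5) by simp
    qed
    ultimately show ?thesis using f(6) by blast
  qed
  then show ?case by simp
qed

lemma em_card: "admissible t \<Longrightarrow> card (edge_map t) + 3 = 2 * card (label t)"
proof (induction t)
  case (Leaf X)
  then show ?case by simp
next
  case (Node X t1 t2)
  note nf = node_facts[OF Node.prems(1)]
  define V1 where "V1 = label t1"
  define V2 where "V2 = label t2"
  define E1 where "E1 = edge_map t1"
  define E2 where "E2 = edge_map t2"
  have c1: "card E1 + 3 = 2 * card V1" using Node.IH(1)[OF nf(1)] E1_def V1_def by simp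
  have c2: "card E2 + 3 = 2 * card V2" using Node.IH(2)[OF nf(2)] E2_def V2_def by simp
  have s1: "\<And>e. e \<in> E1 \<Longrightarrow> e \<subseteq> V1 \<and> card e = 2" using em_sub[OF nf(1)] E1_def V1_def by blast
  have s2: "\<And>e. e \<in> E2 \<Longrightarrow> e \<subseteq> V2 \<and> card e = 2" using em_sub[OF nf(2)] E2_def V2_def by blast
  have disj: "E1 \<inter> E2 = {}"
  proof (rule ccontr)
    assume "E1 \<inter> E2 \<noteq> {}"
    then obtain e where e: "e \<in> E1" "e \<in> E2" by blast
    then have "e \<subseteq> V1 \<inter> V2" using s1 s2 by blast
    then have "e \<subseteq> {Max V1}" using nf(11) V1_def V2_def by simp
    then have "card e \<le> card {Max V1}" by (intro card_mono) auto
    then have "card e \<le> 1" by simp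
    then show False using s1 e(1) by simp
  qed
  have r1: "{Min X, Max X} \<notin> E1" using s1 nf(10) V1_def by blast
  have r2: "{Min X, Max X} \<notin> E2" using s2 nf(8) V2_def by blast
  have fE: "finite E1" "finite E2" using em_finite E1_def E2_def by auto
  have "card (edge_map (Node X t1 t2)) = Suc (card E1 + card E2)"
    using r1 r2 disj fE by (simp add: E1_def E2_def card_Un_disjoint)
  moreover have "card V1 + card V2 = card X + 1"
    using card_Un_Int[OF nf(13) nf(14)] nf(11,12) V1_def V2_def by simp
  ultimately show ?case using c1 c2 V1_def V2_def by simp
qed




lemma card_le1: "e \<subseteq> {x} \<Longrightarrow> card e \<le> 1"
proof -
  assume "e \<subseteq> {x}"
  then have "card e \<le> card {x}" by (intro card_mono) auto
  then show ?thesis by simp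
qed

lemma H1:
  assumes a1: "admissible (Node X t1 t2)" and a2: "admissible (Node X s1 s2)"
    and eq: "edge_map (Node X t1 t2) = edge_map (Node X s1 s2)"
  shows "Max (label s1) \<in> label t1"
proof -
  note nt = node_facts[OF a1] and ns = node_facts[OF a2]
  have "{Min (label s1), Max (label s1)} \<in> edge_map s1" by (rule root_in[OF ns(1)])
  then have "{Min X, Max (label s1)} \<in> edge_map (Node X s1 s2)" using ns(21) by simp
  then have e: "{Min X, Max (label s1)} \<in> insert {Min X, Max X} (edge_map t1 \<union> edge_map t2)"
    using eq by simp
  have ne: "{Min X, Max (label s1)} \<noteq> {Min X, Max X}"
  proof
    assume "{Min X, Max (label s1)} = {Min X, Max X}"
    then have "Max (label s1) \<in> {Min X, Max X}" by (metis insertCI)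
    then show False using ns(22,23) by blast
  qed
  have n2: "{Min X, Max (label s1)} \<notin> edge_map t2"
  proof
    assume "{Min X, Max (label s1)} \<in> edge_map t2"
    then have "Min X \<in> label t2" using em_sub[OF nt(2)] by blast
    then show False using nt(8) by simp
  qed
  have "{Min X, Max (label s1)} \<in> edge_map t1" using e ne n2 by blast
  then show ?thesis using em_sub[OF nt(1)] by blast
qed

lemma H2:
  assumes a1: "admissible (Node X t1 t2)" and a2: "admissible (Node X s1 s2)"
    and eq: "edge_map (Node X t1 t2) = edge_map (Node X s1 s2)"
    and mm: "Max (label t1) = Max (label s1)"
  shows "label t1 \<subseteq> label s1"
proof -
  note nt = node_facts[OF a1] and ns = node_facts[OF a2]
  have E: "\<forall>e\<in>edge_map t1. e \<subseteq> label s1 \<or> e \<subseteq> label s2"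
  proof
    fix e assume e: "e \<in> edge_map t1"
    then have es: "e \<subseteq> label t1" using em_sub[OF nt(1)] by blast
    have "e \<in> edge_map (Node X s1 s2)" using e eq[symmetric] by simp
    then have "e = {Min X, Max X} \<or> e \<in> edge_map s1 \<or> e \<in> edge_map s2" by simp
    moreover have "e \<noteq> {Min X, Max X}"
    proof
      assume "e = {Min X, Max X}"
      then have "Max X \<in> label t1" using es by blast
      then show False using nt(10) by simp
    qed
    ultimately show "e \<subseteq> label s1 \<or> e \<subseteq> label s2"
      using em_sub[OF ns(1)] em_sub[OF ns(2)] by blast
  qed
  have AB: "label s1 \<inter> label s2 \<subseteq> {Max (label t1)}" using ns(11) mm by simp
  have "label t1 \<subseteq> label s1 \<or> label t1 \<subseteq> label s2"
    by (rule sep[OF nt(1) E AB]) simp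
  moreover have "\<not> label t1 \<subseteq> label s2" using nt(7) ns(8) by blast
  ultimately show ?thesis by blast
qed

lemma H3: "admissible (Node X t1 t2) \<Longrightarrow> label t2 = insert (Max (label t1)) (X - label t1)"
proof -
  assume a: "admissible (Node X t1 t2)"
  note nt = node_facts[OF a]
  show ?thesis
  proof (intro equalityI subsetI)
    fix x assume x: "x \<in> label t2"
    show "x \<in> insert (Max (label t1)) (X - label t1)"
    proof (cases "x \<in> label t1")
      case True
      then have "x \<in> label t1 \<inter> label t2" using x by blast
      then show ?thesis using nt(11) by simp
    next
      case False
      then show ?thesis using x nt(6) by blast
    qed
  next
    fix x assume x: "x \<in> insert (Max (label t1)) (X - label t1)"
    show "x \<in> label t2"
    proof (cases "x = Max (label t1)")
      case True then show ?thesis using nt(18) by simp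
    next
      case False
      then have "x \<in> X" "x \<notin> label t1" using x by auto
      then show ?thesis using nt(12) by blast
    qed
  qed
qed

lemma H4:
  assumes a: "admissible (Node X t1 t2)"
  shows "edge_map t1 = {e \<in> edge_map (Node X t1 t2). e \<subseteq> label t1}"
    "edge_map t2 = {e \<in> edge_map (Node X t1 t2). e \<subseteq> label t2}"
proof -
  note nt = node_facts[OF a]
  have no12: "\<And>e. e \<in> edge_map t2 \<Longrightarrow> e \<subseteq> label t1 \<Longrightarrow> False"
  proof -
    fix e assume e: "e \<in> edge_map t2" "e \<subseteq> label t1"
    then have "e \<subseteq> label t1 \<inter> label t2" "card e = 2" using em_sub[OF nt(2)] by blast+
    then have "e \<subseteq> {Max (label t1)}" using nt(11) by simp
    then show False using card_le1 \<open>card e = 2\<close> by fastforce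
  qed
  have no21: "\<And>e. e \<in> edge_map t1 \<Longrightarrow> e \<subseteq> label t2 \<Longrightarrow> False"
  proof -
    fix e assume e: "e \<in> edge_map t1" "e \<subseteq> label t2"
    then have "e \<subseteq> label t1 \<inter> label t2" "card e = 2" using em_sub[OF nt(1)] by blast+
    then have "e \<subseteq> {Max (label t1)}" using nt(11) by simp
    then show False using card_le1 \<open>card e = 2\<close> by fastforce
  qed
  have r1: "\<not> {Min X, Max X} \<subseteq> label t1" using nt(10) by blast
  have r2: "\<not> {Min X, Max X} \<subseteq> label t2" using nt(8) by blast
  show "edge_map t1 = {e \<in> edge_map (Node X t1 t2). e \<subseteq> label t1}"
  proof (intro equalityI subsetI)
    fix e assume "e \<in> edge_map t1" then show "e \<in> {e \<in> edge_map (Node X t1 t2). e \<subseteq> label t1}"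
      using em_sub[OF nt(1)] by simp
  next
    fix e assume "e \<in> {e \<in> edge_map (Node X t1 t2). e \<subseteq> label t1}"
    then have "e = {Min X, Max X} \<or> e \<in> edge_map t1 \<or> e \<in> edge_map t2" "e \<subseteq> label t1" by auto
    then show "e \<in> edge_map t1" using r1 no12 by blast
  qed
  show "edge_map t2 = {e \<in> edge_map (Node X t1 t2). e \<subseteq> label t2}"
  proof (intro equalityI subsetI)
    fix e assume "e \<in> edge_map t2" then show "e \<in> {e \<in> edge_map (Node X t1 t2). e \<subseteq> label t2}"
      using em_sub[OF nt(2)] by simp
  next
    fix e assume "e \<in> {e \<in> edge_map (Node X t1 t2). e \<subseteq> label t2}"
    then have "e = {Min X, Max X} \<or> e \<in> edge_map t1 \<or> e \<in> edge_map t2" "e \<subseteq> label t2" by auto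
    then show "e \<in> edge_map t2" using r2 no21 by blast
  qed
qed

lemma em_inj:
  "admissible T \<Longrightarrow> admissible T' \<Longrightarrow> label T = label T' \<Longrightarrow> edge_map T = edge_map T' \<Longrightarrow> T = T'"
proof (induction T arbitrary: T')
  case (Leaf X)
  show ?case
  proof (cases T')
    case (Leaf Y) then show ?thesis using Leaf.prems(3) by simp
  next
    case (Node Y s1 s2)
    then show ?thesis using Leaf.prems(1,2,3) by simp
  qed
next
  case (Node X t1 t2)
  show ?case
  proof (cases T')
    case (Leaf Y) then show ?thesis using Node.prems(1,2,3) by simp
  next
    case (Node Y s1 s2)
    have Y: "Y = X" using Node Node.prems(3) by simp
    have a1: "admissible (Node X t1 t2)" by (fact Node.prems(1))
    have a2: "admissible (Node X s1 s2)" using Node.prems(2) Node Y by simp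
    have eq: "edge_map (Node X t1 t2) = edge_map (Node X s1 s2)" using Node.prems(4) Node Y by simp
    note nt = node_facts[OF a1] and ns = node_facts[OF a2]
    have m1: "Max (label s1) \<le> Max (label t1)" using H1[OF a1 a2 eq] nt(19) by blast
    have m2: "Max (label t1) \<le> Max (label s1)" using H1[OF a2 a1 eq[symmetric]] ns(19) by blast
    have mm: "Max (label t1) = Max (label s1)" using m1 m2 by simp
    have l1: "label t1 = label s1" using H2[OF a1 a2 eq mm] H2[OF a2 a1 eq[symmetric] mm[symmetric]] by blast
    have l2: "label t2 = label s2" using H3[OF a1] H3[OF a2] l1 by simp
    have e1: "edge_map t1 = edge_map s1" using H4(1)[OF a1] H4(1)[OF a2] eq l1 by (simp del: em_Node)
    have e2: "edge_map t2 = edge_map s2" using H4(2)[OF a1] H4(2)[OF a2] eq l2 by (simp del: em_Node)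
    have "t1 = s1" using Node.IH(1)[OF nt(1) ns(1) l1 e1] .
    moreover have "t2 = s2" using Node.IH(2)[OF nt(2) ns(2) l2 e2] .
    ultimately show ?thesis using Node Y by simp
  qed
qed




lemma cross:
  assumes pr: "\<forall>n. Suc n < length xs \<longrightarrow> {xs!n, xs!Suc n} \<subseteq> A \<or> {xs!n, xs!Suc n} \<subseteq> B"
  shows "i < j \<Longrightarrow> j < length xs \<Longrightarrow> xs!i \<notin> B \<Longrightarrow> xs!j \<notin> A \<Longrightarrow> \<exists>l. i < l \<and> l < j \<and> xs!l \<in> A \<and> xs!l \<in> B"
proof (induction "j - i" arbitrary: i)
  case 0 then show ?case by simp
next
  case (Suc d)
  have "Suc i < length xs" using Suc.prems by simp
  then have "{xs!i, xs!Suc i} \<subseteq> A \<or> {xs!i, xs!Suc i} \<subseteq> B" using pr by blast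
  then have iA: "xs!Suc i \<in> A" using Suc.prems(3) by blast
  have "Suc i \<noteq> j" using iA Suc.prems(4) by auto
  then have sj: "Suc i < j" using Suc.prems(1) by simp
  show ?case
  proof (cases "xs!Suc i \<in> B")
    case True then show ?thesis using iA sj by auto
  next
    case False
    have "d = j - Suc i" using Suc.hyps(2) by simp
    from Suc.hyps(1)[OF this sj Suc.prems(2) False Suc.prems(4)]
    obtain l where "Suc i < l \<and> l < j \<and> xs!l \<in> A \<and> xs!l \<in> B" by blast
    then show ?thesis by (intro exI[of _ l]) simp
  qed
qed

lemma path_set: "is_path F vs \<Longrightarrow> 2 \<le> length vs \<Longrightarrow> set vs \<subseteq> \<Union>F"
proof
  fix x assume p: "is_path F vs" and l: "2 \<le> length vs" and x: "x \<in> set vs"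
  then obtain i where i: "i < length vs" "vs!i = x" by (auto simp: in_set_conv_nth)
  show "x \<in> \<Union>F"
  proof (cases "Suc i < length vs")
    case True
    then have "{vs!i, vs!Suc i} \<in> F" using p unfolding is_path_def by blast
    then show ?thesis using i by blast
  next
    case False
    then have "i = Suc (i - 1)" "Suc (i - 1) < length vs" using l i by auto
    then have "{vs!(i-1), vs!i} \<in> F" using p unfolding is_path_def by (metis)
    then show ?thesis using i by blast
  qed
qed

lemma path_mono: "is_path F vs \<Longrightarrow> (\<forall>n. Suc n < length vs \<longrightarrow> {vs!n, vs!Suc n} \<in> G) \<Longrightarrow> is_path G vs"
  unfolding is_path_def by blast

lemma face_em: "admissible t \<Longrightarrow> \<not> forbidden_path (edge_map t) vs"
proof (induction t arbitrary: vs)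
  case (Leaf X)
  show ?case
  proof
    assume fp: "forbidden_path (edge_map (Leaf X)) vs"
    then have p: "is_path {{Min X, Max X}} vs" and l: "4 \<le> length vs"
      unfolding forbidden_path_def by auto
    have "set vs \<subseteq> {Min X, Max X}" using path_set[OF p] l by simp
    then have "card (set vs) \<le> card {Min X, Max X}" by (intro card_mono) auto
    also have "\<dots> \<le> 2" by (simp add: card_insert_le_m1)
    finally have "length vs \<le> 2" using p distinct_card unfolding is_path_def by metis
    then show False using l by simp
  qed
next
  case (Node X t1 t2)
  note nt = node_facts[OF Node.prems(1)]
  define V1 where "V1 = label t1"
  define V2 where "V2 = label t2"
  define m where "m = Max V1"
  define a where "a = Min X"
  define b where "b = Max X"
  define E where "E = edge_map (Node X t1 t2)"
  have Ed: "E = insert {a, b} (edge_map t1 \<union> edge_map t2)" unfolding E_def a_def b_def by simp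
  show ?case
  proof
    assume fp: "forbidden_path (edge_map (Node X t1 t2)) vs"
    define k where "k = length vs"
    have p: "is_path E vs" and k4: "4 \<le> k" and hd: "hd vs = Max (set vs)"
      and lst: "last vs = Max (set (tl vs))" and gt: "vs ! 1 > vs ! (k - 2)"
      using fp unfolding forbidden_path_def E_def k_def by auto
    have dist: "distinct vs" and ne: "vs \<noteq> []" using p unfolding is_path_def by auto
    have pe: "\<And>n. Suc n < k \<Longrightarrow> {vs!n, vs!Suc n} \<in> E" using p unfolding is_path_def k_def by blast
    have UE: "\<Union>E \<subseteq> X"
    proof
      fix x assume "x \<in> \<Union>E"
      then obtain e where "e \<in> E" "x \<in> e" by blast
      then show "x \<in> X" using em_sub[OF Node.prems(1)] E_def by auto
    qed
    have sX: "set vs \<subseteq> X" using path_set[OF p] k4 UE k_def by auto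
    have fs: "finite (set vs)" by simp
    have hd0: "hd vs = vs!0" using ne by (simp add: hd_conv_nth)
    have lastk: "last vs = vs!(k-1)" using ne k_def by (simp add: last_conv_nth)
    have idx: "\<And>i j. i < k \<Longrightarrow> j < k \<Longrightarrow> vs!i = vs!j \<Longrightarrow> i = j"
      using dist nth_eq_iff_index_eq k_def by blast
    have ab: "a < b" using min_less_max[of X] nt(3,4) a_def b_def by simp
    show False
    proof (cases "\<exists>n. Suc n < k \<and> {vs!n, vs!Suc n} = {a, b}")
      case True
      then obtain n where n: "Suc n < k" "{vs!n, vs!Suc n} = {a, b}" by blast
      have "b \<in> {vs!n, vs!Suc n}" using n(2) by simp
      moreover have "vs!n \<in> set vs" "vs!Suc n \<in> set vs" using n(1) k_def by simp_all
      ultimately have "b \<in> set vs" by auto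
      then have "b \<le> hd vs" using hd fs by simp
      moreover have "hd vs \<in> X" using sX ne by (simp add: subset_iff)
      then have "hd vs \<le> b" using nt(3) b_def by simp
      ultimately have h: "vs!0 = b" using hd0 by simp
      have "vs!n = a \<and> vs!Suc n = b \<or> vs!n = b \<and> vs!Suc n = a" using n(2) ab
        by (metis doubleton_eq_iff)
      moreover have "vs!Suc n \<noteq> b" using idx[of "Suc n" 0] n(1) h by auto
      ultimately have "vs!n = b" "vs!Suc n = a" by auto
      then have "n = 0" using idx[of n 0] n(1) h by simp
      then have v1: "vs!1 = a" using \<open>vs!Suc n = a\<close> by simp
      have "vs!(k-2) \<in> X" using sX k4 k_def by (simp add: subset_iff)
      then have "a \<le> vs!(k-2)" using nt(3) a_def by simp
      then show False using gt v1 by simp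
    next
      case False
      have E12: "\<And>n. Suc n < k \<Longrightarrow> {vs!n, vs!Suc n} \<in> edge_map t1 \<union> edge_map t2"
        using pe False Ed by blast
      have pr: "\<forall>n. Suc n < length vs \<longrightarrow> {vs!n, vs!Suc n} \<subseteq> V1 \<or> {vs!n, vs!Suc n} \<subseteq> V2"
        using E12 em_sub[OF nt(1)] em_sub[OF nt(2)] V1_def V2_def k_def by blast
      have I: "V1 \<inter> V2 = {m}" using nt(11) V1_def V2_def m_def by simp
      have no12: "\<And>e. e \<in> edge_map t2 \<Longrightarrow> e \<subseteq> V1 \<Longrightarrow> False"
      proof -
        fix e assume e: "e \<in> edge_map t2" "e \<subseteq> V1"
        then have "e \<subseteq> V1 \<inter> V2" "card e = 2" using em_sub[OF nt(2)] V2_def by blast+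
        then have "e \<subseteq> {m}" using I by simp
        then show False using card_le1 \<open>card e = 2\<close> by fastforce
      qed
      have no21: "\<And>e. e \<in> edge_map t1 \<Longrightarrow> e \<subseteq> V2 \<Longrightarrow> False"
      proof -
        fix e assume e: "e \<in> edge_map t1" "e \<subseteq> V2"
        then have "e \<subseteq> V1 \<inter> V2" "card e = 2" using em_sub[OF nt(1)] V1_def by blast+
        then have "e \<subseteq> {m}" using I by simp
        then show False using card_le1 \<open>card e = 2\<close> by fastforce
      qed
      have pv: "\<And>n. Suc n < k \<Longrightarrow> vs!n \<in> set vs \<and> vs!Suc n \<in> set vs" using k_def by simp
      show False
      proof (cases "set vs \<subseteq> V1")
        case True
        have "\<forall>n. Suc n < length vs \<longrightarrow> {vs!n, vs!Suc n} \<in> edge_map t1"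
        proof (intro allI impI)
          fix n assume "Suc n < length vs"
          then have "{vs!n, vs!Suc n} \<in> edge_map t1 \<union> edge_map t2" "{vs!n, vs!Suc n} \<subseteq> V1"
            using E12 pv True k_def by auto
          then show "{vs!n, vs!Suc n} \<in> edge_map t1" using no12 by blast
        qed
        then have "forbidden_path (edge_map t1) vs"
          using path_mono[OF p] fp unfolding forbidden_path_def by blast
        then show False using Node.IH(1)[OF nt(1)] by blast
      next
        case nV1: False
        show False
        proof (cases "set vs \<subseteq> V2")
          case True
          have "\<forall>n. Suc n < length vs \<longrightarrow> {vs!n, vs!Suc n} \<in> edge_map t2"
          proof (intro allI impI)
            fix n assume "Suc n < length vs"
            then have "{vs!n, vs!Suc n} \<in> edge_map t1 \<union> edge_map t2" "{vs!n, vs!Suc n} \<subseteq> V2"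
              using E12 pv True k_def by auto
            then show "{vs!n, vs!Suc n} \<in> edge_map t2" using no21 by blast
          qed
          then have "forbidden_path (edge_map t2) vs"
            using path_mono[OF p] fp unfolding forbidden_path_def by blast
          then show False using Node.IH(2)[OF nt(2)] by blast
        next
          case nV2: False
          have "\<exists>i<k. vs!i \<notin> V2" using nV2 unfolding k_def by (metis in_set_conv_nth subsetI)
          then obtain i where i: "i < k" "vs!i \<notin> V2" by blast
          have "\<exists>j<k. vs!j \<notin> V1" using nV1 unfolding k_def by (metis in_set_conv_nth subsetI)
          then obtain j where j: "j < k" "vs!j \<notin> V1" by blast
          have XU: "X = V1 \<union> V2" using nt(12) V1_def V2_def by simp
          have iV1: "vs!i \<in> V1" using i sX XU k_def by (metis UnE nth_mem subsetD)
          have le1: "\<And>x. x \<in> V1 \<Longrightarrow> x \<le> m" using nt(19) V1_def m_def by simp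
          have crossAB: "\<And>i j. i < j \<Longrightarrow> j < k \<Longrightarrow> vs!i \<notin> V2 \<Longrightarrow> vs!j \<notin> V1 \<Longrightarrow> \<exists>l. i < l \<and> l < j \<and> vs!l = m"
          proof -
            fix i j assume "i < j" "j < k" "vs!i \<notin> V2" "vs!j \<notin> V1"
            then obtain l where "i < l \<and> l < j \<and> vs!l \<in> V1 \<and> vs!l \<in> V2"
              using cross[OF pr] k_def by blast
            then show "\<exists>l. i < l \<and> l < j \<and> vs!l = m" using I by blast
          qed
          have pr': "\<forall>n. Suc n < length vs \<longrightarrow> {vs!n, vs!Suc n} \<subseteq> V2 \<or> {vs!n, vs!Suc n} \<subseteq> V1"
            using pr by blast
          have crossBA: "\<And>i j. i < j \<Longrightarrow> j < k \<Longrightarrow> vs!i \<notin> V1 \<Longrightarrow> vs!j \<notin> V2 \<Longrightarrow> \<exists>l. i < l \<and> l < j \<and> vs!l = m"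
          proof -
            fix i j assume "i < j" "j < k" "vs!i \<notin> V1" "vs!j \<notin> V2"
            then obtain l where "i < l \<and> l < j \<and> vs!l \<in> V2 \<and> vs!l \<in> V1"
              using cross[OF pr'] k_def by blast
            then show "\<exists>l. i < l \<and> l < j \<and> vs!l = m" using I by blast
          qed
          have "i \<noteq> j" using iV1 j by auto
          then obtain l where l: "0 < l" "l < k - 1" "vs!l = m"
          proof (cases "i < j")
            case True
            then obtain l where "i < l \<and> l < j \<and> vs!l = m" using crossAB i j by blast
            then have "0 < l" "l < k - 1" "vs!l = m" using j by auto
            then show ?thesis by (rule that)
          next
            case False
            then have "j < i" using \<open>i \<noteq> j\<close> by simp
            then obtain l where "j < l \<and> l < i \<and> vs!l = m" using crossBA i j by blast
            then have "0 < l" "l < k - 1" "vs!l = m" using i by auto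
            then show ?thesis by (rule that)
          qed
          have "l < length vs" using l k_def by simp
          then have "m \<in> set vs" using l(3) nth_mem by metis
          then have "m \<le> vs!0" using hd hd0 fs by simp
          moreover have "vs!0 \<noteq> m"
          proof
            assume "vs!0 = m"
            moreover have "l < k" "0 < k" using l by linarith+
            ultimately have "0 = l" using idx[of 0 l] l(3) by simp
            then show False using l(1) by simp
          qed
          ultimately have v0: "vs!0 \<notin> V1" using le1 by fastforce
          have ll: "l - 1 < length (tl vs)" using l k_def by simp
          have "tl vs ! (l - 1) = vs ! Suc (l - 1)" by (rule nth_tl[OF ll])
          also have "Suc (l - 1) = l" using l(1) by simp
          finally have "tl vs ! (l - 1) = m" using l(3) by simp
          moreover note ll
          ultimately have "m \<in> set (tl vs)" by (metis nth_mem)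
          then have "m \<le> vs!(k-1)" using lst lastk by simp
          moreover have "vs!(k-1) \<noteq> m"
          proof
            assume "vs!(k-1) = m"
            moreover have "l < k" "k - 1 < k" using l k4 by linarith+
            ultimately have "k - 1 = l" using idx[of "k-1" l] l(3) by simp
            then show False using l(2) by simp
          qed
          ultimately have vk: "vs!(k-1) \<notin> V1" using le1 by fastforce
          have i0: "0 < i" using v0 iV1 by (cases i) auto
          have ik: "i < k - 1" using vk iV1 i by (metis Suc_pred' diff_less gr_zeroI less_Suc_eq not_less_zero zero_less_one)
          obtain l1 where l1: "0 < l1" "l1 < i" "vs!l1 = m" using crossBA[OF i0 _ v0 i(2)] i by blast
          obtain l2 where l2: "i < l2" "l2 < k - 1" "vs!l2 = m" using crossAB[OF ik _ i(2) vk] k4 by auto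
          have "l1 < k" "l2 < k" using l1 l2 i by linarith+
          then have "l1 = l2" using idx[of l1 l2] l1(3) l2(3) by simp
          then show False using l1 l2 by simp
        qed
      qed
    qed
  qed
qed




lemma path_single: "is_path F [a]"
  unfolding is_path_def by simp

lemma path_take: "is_path F vs \<Longrightarrow> 0 < n \<Longrightarrow> is_path F (take n vs)"
  unfolding is_path_def by auto

lemma path_snoc: "is_path F vs \<Longrightarrow> y \<notin> set vs \<Longrightarrow> {last vs, y} \<in> F \<Longrightarrow> is_path F (vs @ [y])"
  unfolding is_path_succ by (auto simp: successively_append_iff)

lemma succ_sym: "successively (\<lambda>x y. {y, x} \<in> F) vs = successively (\<lambda>x y. {x, y} \<in> F) vs"
  by (simp add: insert_commute)

lemma path_V: "is_path F vs \<Longrightarrow> \<forall>e\<in>F. e \<subseteq> V \<Longrightarrow> hd vs \<in> V \<Longrightarrow> set vs \<subseteq> V"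
proof -
  assume p: "is_path F vs" and FV: "\<forall>e\<in>F. e \<subseteq> V" and h: "hd vs \<in> V"
  show ?thesis
  proof (cases "2 \<le> length vs")
    case True
    then show ?thesis using path_set[OF p] FV by blast
  next
    case False
    then have "vs = [hd vs]" using p unfolding is_path_def by (cases vs) (auto simp: Suc_le_eq)
    then show ?thesis using h by (metis empty_set empty_subsetI insert_subset list.simps(15))
  qed
qed

lemma face_mono: "is_face V F \<Longrightarrow> G \<subseteq> F \<Longrightarrow> G \<subseteq> edges_K W \<Longrightarrow> is_face W G"
proof -
  assume f: "is_face V F" and s: "G \<subseteq> F" and w: "G \<subseteq> edges_K W"
  have "\<And>vs. forbidden_path G vs \<Longrightarrow> forbidden_path F vs"
    unfolding forbidden_path_def is_path_def using s by blast
  then show ?thesis using f w unfolding is_face_def by blast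
qed




lemma fp_construct:
  assumes p: "is_path F vs" and h: "hd vs = a" and l: "last vs = x" and lt: "\<forall>v\<in>set vs. v < m"
    and xa: "a < x" and xy: "{x, y} \<in> F" and am: "{a, m} \<in> F" and my: "m < y"
  shows "forbidden_path F (y # rev vs @ [m])"
proof -
  have ne: "vs \<noteq> []" and d: "distinct vs" and s: "successively (\<lambda>x y. {x, y} \<in> F) vs"
    using p unfolding is_path_succ by auto
  have l2: "2 \<le> length vs"
  proof (rule ccontr)
    assume "\<not> 2 \<le> length vs"
    then have "length vs = 1" using ne by (cases vs) (auto simp: Suc_le_eq)
    then have "hd vs = last vs" by (cases vs) auto
    then show False using h l xa by simp
  qed
  define ws where "ws = y # rev vs @ [m]"
  have yv: "y \<notin> set vs" using lt my by force
  have mv: "m \<notin> set vs" using lt by blast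
  have dw: "distinct ws" unfolding ws_def using d yv mv my by auto
  have hr: "hd (rev vs @ [m]) = x" using ne l by (simp add: hd_rev)
  have lr: "last (rev vs) = a" using ne h by (simp add: last_rev)
  have s1: "successively (\<lambda>x y. {x, y} \<in> F) (rev vs)"
    using s by (simp add: succ_sym)
  have s2: "successively (\<lambda>x y. {x, y} \<in> F) (rev vs @ [m])"
    using s1 lr am ne by (simp add: successively_append_iff)
  have sw: "successively (\<lambda>x y. {x, y} \<in> F) ws"
    unfolding ws_def using s2 hr xy by (simp add: successively_Cons insert_commute)
  have pw: "is_path F ws" unfolding is_path_succ using dw sw ws_def by simp
  have lw: "4 \<le> length ws" using l2 ws_def by simp
  have hw: "hd ws = Max (set ws)"
  proof -
    have "Max (set ws) = y"
      by (rule Max_eqI) (use lt my in \<open>auto simp: ws_def\<close>)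
    then show ?thesis by (simp add: ws_def)
  qed
  have lw2: "last ws = Max (set (tl ws))"
  proof -
    have "Max (set (tl ws)) = m"
      by (rule Max_eqI) (use lt in \<open>auto simp: ws_def less_imp_le\<close>)
    then show ?thesis by (simp add: ws_def)
  qed
  have w1: "ws ! 1 = x"
  proof -
    have "ws ! 1 = (rev vs @ [m]) ! 0" by (simp add: ws_def)
    also have "\<dots> = hd (rev vs @ [m])" by (simp add: hd_conv_nth)
    finally show ?thesis using hr by simp
  qed
  have w2: "ws ! (length ws - 2) = a"
  proof -
    have e: "length ws - 2 = Suc (length vs - 1)" using l2 ws_def by simp
    have "ws ! Suc (length vs - 1) = (rev vs @ [m]) ! (length vs - 1)" by (simp only: ws_def nth_Cons_Suc)
    then have "ws ! (length ws - 2) = (rev vs @ [m]) ! (length vs - 1)" by (simp only: e)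
    also have "\<dots> = rev vs ! (length vs - 1)"
    proof -
      have "length vs - 1 < length (rev vs)" using l2 by simp
      then show ?thesis by (simp only: nth_append if_True)
    qed
    also have "\<dots> = vs ! 0" using l2 by (simp add: rev_nth)
    also have "\<dots> = a" using h ne by (simp add: hd_conv_nth)
    finally show ?thesis .
  qed
  show ?thesis unfolding forbidden_path_def ws_def[symmetric]
    using pw lw hw lw2 w1 w2 xa by simp
qed




lemma split_exists:
  assumes fV: "finite V" and c3: "3 \<le> card V" and face: "is_face V F"
  obtains V1 V2 where "V1 \<subseteq> V" "V2 \<subseteq> V" "Min V \<in> V1" "Min V \<notin> V2" "Max V \<in> V2" "Max V \<notin> V1"
     "V1 \<union> V2 = V" "V1 \<inter> V2 = {Max V1}" "2 \<le> card V1" "2 \<le> card V2"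
     "\<forall>e\<in>F. e \<noteq> {Min V, Max V} \<longrightarrow> e \<subseteq> V1 \<or> e \<subseteq> V2"
proof -
  define a where "a = Min V"
  define b where "b = Max V"
  have Vne: "V \<noteq> {}" using c3 by auto
  have aV: "a \<in> V" and bV: "b \<in> V" using fV Vne a_def b_def by auto
  have amin: "\<And>x. x \<in> V \<Longrightarrow> a \<le> x" using fV a_def by simp
  have bmax: "\<And>x. x \<in> V \<Longrightarrow> x \<le> b" using fV b_def by simp
  have FE: "\<And>e. e \<in> F \<Longrightarrow> e \<subseteq> V \<and> card e = 2"
    using face unfolding is_face_def edges_K_def by blast
  have nofp: "\<And>ws. \<not> forbidden_path F ws" using face unfolding is_face_def by blast
  have FV: "\<forall>e\<in>F. e \<subseteq> V" using FE by blast
  define N where "N = {y. {a, y} \<in> F \<and> y \<noteq> b}"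
  have NV: "N \<subseteq> V" using FE unfolding N_def by blast
  have fN: "finite N" using NV fV finite_subset by blast
  have "\<not> V \<subseteq> {a, b}"
  proof
    assume "V \<subseteq> {a, b}"
    then have "card V \<le> card {a, b}" by (intro card_mono) auto
    also have "\<dots> \<le> 2" by (simp add: card_insert_le_m1)
    finally show False using c3 by simp
  qed
  then have exc: "\<exists>c. c \<in> V \<and> c \<noteq> a \<and> c \<noteq> b" by blast
  define m where "m = (if N = {} then (SOME c. c \<in> V \<and> c \<noteq> a \<and> c \<noteq> b) else Max N)"
  have mN: "N \<noteq> {} \<Longrightarrow> {a, m} \<in> F \<and> (\<forall>y\<in>N. y \<le> m) \<and> m \<in> N"
  proof -
    assume ne: "N \<noteq> {}"
    then have "m = Max N" "Max N \<in> N" using m_def fN by auto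
    then show ?thesis using fN N_def by auto
  qed
  have mprop: "m \<in> V \<and> m \<noteq> a \<and> m \<noteq> b"
  proof (cases "N = {}")
    case True
    then show ?thesis using m_def exc someI_ex[OF exc] by simp
  next
    case False
    then have "m \<in> N" "{a, m} \<in> F" using mN by auto
    moreover have "m \<noteq> a"
    proof
      assume "m = a"
      then have "card {a, m} = 1" by simp
      then show False using FE \<open>{a, m} \<in> F\<close> by fastforce
    qed
    ultimately show ?thesis using NV N_def by auto
  qed
  have am: "a < m" using mprop amin by (metis le_neq_implies_less)
  have mb: "m < b" using mprop bmax by (metis le_neq_implies_less)
  define D where "D = {x. \<exists>vs. is_path F vs \<and> hd vs = a \<and> last vs = x \<and> (\<forall>v\<in>set vs. v < m)}"
  have aD: "a \<in> D" unfolding D_def using path_single[of F a] am by (intro CollectI exI[of _ "[a]"]) simp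
  have Dlt: "\<And>x. x \<in> D \<Longrightarrow> x < m"
  proof -
    fix x assume "x \<in> D"
    then obtain vs where "is_path F vs" "last vs = x" "\<forall>v\<in>set vs. v < m" unfolding D_def by blast
    then show "x < m" unfolding is_path_def by auto
  qed
  have DV: "D \<subseteq> V"
  proof
    fix x assume "x \<in> D"
    then obtain vs where p: "is_path F vs" "hd vs = a" "last vs = x" unfolding D_def by blast
    then have "set vs \<subseteq> V" using path_V[OF p(1) FV] aV by simp
    then show "x \<in> V" using p unfolding is_path_def by auto
  qed
  have clos: "\<And>x y. {x, y} \<in> F \<Longrightarrow> x \<in> D \<Longrightarrow> {x, y} \<noteq> {a, b} \<Longrightarrow> y \<noteq> m \<Longrightarrow> y \<in> D"
  proof -
    fix x y assume xy: "{x, y} \<in> F" and xD: "x \<in> D" and nab: "{x, y} \<noteq> {a, b}" and ym: "y \<noteq> m"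
    obtain vs where p: "is_path F vs" and h: "hd vs = a" and l: "last vs = x" and lt: "\<forall>v\<in>set vs. v < m"
      using xD unfolding D_def by blast
    have ne: "vs \<noteq> []" using p unfolding is_path_def by simp
    show "y \<in> D"
    proof (cases "y < m")
      case True
      show ?thesis
      proof (cases "y \<in> set vs")
        case True
        then obtain q where q: "q < length vs" "vs ! q = y" by (auto simp: in_set_conv_nth)
        have p': "is_path F (take (Suc q) vs)" using path_take[OF p] by simp
        have "hd (take (Suc q) vs) = a" using h ne by simp
        moreover have "last (take (Suc q) vs) = y" using q by (simp add: take_Suc_conv_app_nth)
        moreover have "\<forall>v\<in>set (take (Suc q) vs). v < m" using lt by (meson in_set_takeD)
        ultimately show ?thesis unfolding D_def using p' by blast
      next
        case False
        have "is_path F (vs @ [y])" using path_snoc[OF p False] xy l by simp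
        moreover have "hd (vs @ [y]) = a" using h ne by simp
        moreover have "last (vs @ [y]) = y" by simp
        moreover have "\<forall>v\<in>set (vs @ [y]). v < m" using lt \<open>y < m\<close> by simp
        ultimately show ?thesis unfolding D_def by blast
      qed
    next
      case False
      then have my: "m < y" using ym by simp
      show ?thesis
      proof (cases "x = a")
        case True
        then have "y \<noteq> b" using nab by blast
        then have "y \<in> N" using xy True N_def by simp
        then have "y \<le> m" using mN by blast
        then show ?thesis using my by simp
      next
        case False
        have l2: "2 \<le> length vs"
        proof (rule ccontr)
          assume "\<not> 2 \<le> length vs"
          then have "length vs = 1" using ne by (cases vs) (auto simp: Suc_le_eq)
          then have "hd vs = last vs" by (cases vs) auto
          then show False using h l False by simp
        qed
        have "{vs ! 0, vs ! Suc 0} \<in> F" using p l2 unfolding is_path_def by simp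
        moreover have "vs ! 0 = a" using h ne by (simp add: hd_conv_nth)
        moreover have "vs ! 1 < m" using lt l2 by simp
        ultimately have "vs ! 1 \<in> N" using mb N_def by auto
        then have amF: "{a, m} \<in> F" using mN by blast
        have "x \<in> V" using xD DV by blast
        then have xa: "a < x" using amin False by (metis le_neq_implies_less)
        have "forbidden_path F (y # rev vs @ [m])"
          by (rule fp_construct[OF p h l lt xa xy amF my])
        then show ?thesis using nofp by blast
      qed
    qed
  qed
  define V1 where "V1 = insert m D"
  define V2 where "V2 = V - D"
  have mD: "m \<notin> D" using Dlt by blast
  have bD: "b \<notin> D" using Dlt mb by fastforce
  have fD: "finite D" using DV fV finite_subset by blast
  have s1: "V1 \<subseteq> V" using DV mprop V1_def by blast
  have s2: "V2 \<subseteq> V" using V2_def by blast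
  have mx1: "Max V1 = m"
    unfolding V1_def by (rule Max_eqI) (use fD Dlt in \<open>auto simp: less_imp_le\<close>)
  have U: "V1 \<union> V2 = V" using s1 V1_def V2_def by blast
  have I: "V1 \<inter> V2 = {Max V1}" using mx1 mD mprop V1_def V2_def by blast
  have c1: "2 \<le> card V1"
  proof -
    have "{a, m} \<subseteq> V1" using aD V1_def by blast
    then have "card {a, m} \<le> card V1" using fD V1_def by (intro card_mono) auto
    then show ?thesis using am by simp
  qed
  have c2: "2 \<le> card V2"
  proof -
    have "{m, b} \<subseteq> V2" using mD bD mprop bV V2_def by blast
    then have "card {m, b} \<le> card V2" using fV V2_def by (intro card_mono) auto
    then show ?thesis using mb by simp
  qed
  have sp: "\<forall>e\<in>F. e \<noteq> {a, b} \<longrightarrow> e \<subseteq> V1 \<or> e \<subseteq> V2"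
  proof (intro ballI impI)
    fix e assume eF: "e \<in> F" and ne: "e \<noteq> {a, b}"
    obtain x y where e: "e = {x, y}" using FE[OF eF] by (meson card_2_iff)
    have xyV: "x \<in> V" "y \<in> V" using FE[OF eF] e by auto
    show "e \<subseteq> V1 \<or> e \<subseteq> V2"
    proof (cases "x \<in> D")
      case True
      have "y \<in> V1"
      proof (cases "y = m")
        case False
        then have "y \<in> D" using clos[of x y] eF e ne True by simp
        then show ?thesis using V1_def by simp
      qed (simp add: V1_def)
      then show ?thesis using True e V1_def by simp
    next
      case xnD: False
      show ?thesis
      proof (cases "y \<in> D")
        case True
        have e': "{y, x} \<in> F" "{y, x} \<noteq> {a, b}" using eF ne e by (auto simp: insert_commute)
        have "x \<in> V1"
        proof (cases "x = m")
          case False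
          then have "x \<in> D" using clos[of y x] e' True by simp
          then show ?thesis using V1_def by simp
        qed (simp add: V1_def)
        then show ?thesis using True e V1_def by simp
      next
        case False
        then show ?thesis using xnD xyV e V2_def by simp
      qed
    qed
  qed
  show ?thesis
    apply (rule that[of V1 V2])
    using s1 s2 aD bD mD mb V1_def V2_def aV bV U I c1 c2 sp a_def b_def
    by (auto simp del: Max_in)
qed




lemma exists_tree:
  "finite V \<Longrightarrow> 2 \<le> card V \<Longrightarrow> is_face V F \<Longrightarrow> \<exists>T. admissible T \<and> label T = V \<and> F \<subseteq> edge_map T"
proof (induction "card V" arbitrary: V F rule: less_induct)
  case less
  have FE: "\<And>e. e \<in> F \<Longrightarrow> e \<subseteq> V \<and> card e = 2"
    using less.prems(3) unfolding is_face_def edges_K_def by blast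
  show ?case
  proof (cases "card V = 2")
    case True
    have "F \<subseteq> {V}"
    proof
      fix e assume "e \<in> F"
      then have "e \<subseteq> V" "card e = card V" using FE True by auto
      then have "e = V" using card_subset_eq less.prems(1) by blast
      then show "e \<in> {V}" by simp
    qed
    moreover have "{Min V, Max V} = V" using card2_eq[OF True] by simp
    ultimately show ?thesis using True by (intro exI[of _ "Leaf V"]) simp
  next
    case False
    then have c3: "3 \<le> card V" using less.prems(2) by simp
    obtain V1 V2 where S: "V1 \<subseteq> V" "V2 \<subseteq> V" "Min V \<in> V1" "Min V \<notin> V2" "Max V \<in> V2" "Max V \<notin> V1"
      "V1 \<union> V2 = V" "V1 \<inter> V2 = {Max V1}" "2 \<le> card V1" "2 \<le> card V2"
      and sp: "\<forall>e\<in>F. e \<noteq> {Min V, Max V} \<longrightarrow> e \<subseteq> V1 \<or> e \<subseteq> V2"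
      by (rule split_exists[OF less.prems(1) c3 less.prems(3)])
    have f1: "finite V1" "finite V2" using S(1,2) less.prems(1) finite_subset by blast+
    have "Max V \<in> V" using S(2,5) by blast
    then have "V1 \<subset> V" using S(1,6) by blast
    then have lt1: "card V1 < card V" by (rule psubset_card_mono[OF less.prems(1)])
    have "Min V \<in> V" using S(1,3) by blast
    then have "V2 \<subset> V" using S(2,4) by blast
    then have lt2: "card V2 < card V" by (rule psubset_card_mono[OF less.prems(1)])
    define F1 where "F1 = {e \<in> F. e \<subseteq> V1}"
    define F2 where "F2 = {e \<in> F. e \<subseteq> V2}"
    have face1: "is_face V1 F1"
      by (rule face_mono[OF less.prems(3)]) (use FE in \<open>auto simp: F1_def edges_K_def\<close>)
    have face2: "is_face V2 F2"
      by (rule face_mono[OF less.prems(3)]) (use FE in \<open>auto simp: F2_def edges_K_def\<close>)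
    obtain t1 where t1: "admissible t1" "label t1 = V1" "F1 \<subseteq> edge_map t1"
      using less.hyps[OF lt1 f1(1) S(9) face1] by blast
    obtain t2 where t2: "admissible t2" "label t2 = V2" "F2 \<subseteq> edge_map t2"
      using less.hyps[OF lt2 f1(2) S(10) face2] by blast
    have adm: "admissible (Node V t1 t2)"
      using t1 t2 S c3 less.prems(2) by (simp add: Let_def)
    have "F \<subseteq> edge_map (Node V t1 t2)"
    proof
      fix e assume eF: "e \<in> F"
      show "e \<in> edge_map (Node V t1 t2)"
      proof (cases "e = {Min V, Max V}")
        case True then show ?thesis by simp
      next
        case False
        then have "e \<subseteq> V1 \<or> e \<subseteq> V2" using sp eF by blast
        then have "e \<in> F1 \<or> e \<in> F2" using eF F1_def F2_def by blast
        then show ?thesis using t1 t2 by auto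
      qed
    qed
    then show ?thesis using adm by (intro exI[of _ "Node V t1 t2"]) simp
  qed
qed

lemma em_face: "admissible T \<Longrightarrow> label T = V \<Longrightarrow> is_face V (edge_map T)"
  unfolding is_face_def edges_K_def using em_sub face_em by blast

theorem theorem6p4:
  fixes V :: "nat set"
  assumes "finite V" and "card V \<ge> 2"
  shows "bij_betw edge_map (Adm V) (facets V)"
proof -
  have crd: "\<And>T T'. T \<in> Adm V \<Longrightarrow> T' \<in> Adm V \<Longrightarrow> card (edge_map T) = card (edge_map T')"
  proof -
    fix T T' assume "T \<in> Adm V" "T' \<in> Adm V"
    then have "card (edge_map T) + 3 = 2 * card V" "card (edge_map T') + 3 = 2 * card V"
      using em_card unfolding Adm_def by auto
    then show "card (edge_map T) = card (edge_map T')" by simp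
  qed
  have max: "\<And>T G. T \<in> Adm V \<Longrightarrow> is_face V G \<Longrightarrow> edge_map T \<subseteq> G \<Longrightarrow> G = edge_map T"
  proof -
    fix T G assume T: "T \<in> Adm V" and G: "is_face V G" and s: "edge_map T \<subseteq> G"
    obtain T' where T': "admissible T'" "label T' = V" "G \<subseteq> edge_map T'"
      using exists_tree[OF assms G] by blast
    then have "T' \<in> Adm V" unfolding Adm_def by simp
    then have "card (edge_map T) = card (edge_map T')" using crd T by blast
    moreover have "edge_map T \<subseteq> edge_map T'" using s T' by blast
    ultimately have "edge_map T = edge_map T'" using card_subset_eq em_finite by metis
    then show "G = edge_map T" using s T' by blast
  qed
  show ?thesis
    unfolding bij_betw_def
  proof
    show "inj_on edge_map (Adm V)"
      by (rule inj_onI) (use em_inj in \<open>auto simp: Adm_def\<close>)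
    show "edge_map ` Adm V = facets V"
    proof
      show "edge_map ` Adm V \<subseteq> facets V"
      proof
        fix F assume "F \<in> edge_map ` Adm V"
        then obtain T where T: "T \<in> Adm V" "F = edge_map T" by blast
        then have "is_face V F" using em_face unfolding Adm_def by blast
        then show "F \<in> facets V" unfolding facets_def using max T by blast
      qed
      show "facets V \<subseteq> edge_map ` Adm V"
      proof
        fix F assume F: "F \<in> facets V"
        then have fF: "is_face V F" unfolding facets_def by blast
        obtain T where T: "admissible T" "label T = V" "F \<subseteq> edge_map T"
          using exists_tree[OF assms fF] by blast
        have "is_face V (edge_map T)" using em_face T by blast
        then have "edge_map T = F" using F T(3) unfolding facets_def by blast
        moreover have "T \<in> Adm V" using T unfolding Adm_def by simp
        ultimately show "F \<in> edge_map ` Adm V" by blast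
      qed
    qed
  qed
qed


end
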